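(* Let $X$ be a random variable with values in $\{x_1,\ldots,x_N\}$. Let $A\geq16$ be such that $\mathbb{P}[X=x_i]\geq\frac1A$ for all $i\in[N]$. Let $J\subseteq\{x_1,\ldots,x_N\}$ and let $\mathcal{E}$ be the event that $X\in J$. Suppose $\mathbb{P}[\mathcal{E}]\geq1-a$ for some $0\leq a\leq\frac12$. Then $H(X)-H(X\mid\mathcal{E})\leq 2a\log A$.
   Context: $\log=\log_2$. For a discrete random variable $X$ with outcomes $x_1,\dots,x_N$ and $p_i=\mathbb{P}[X=x_i]$, $H(X)=-\sum_i p_i\log p_i$ (with $0\log0:=0$). For an event $\mathcal{E}$ of positive probability and $p_i'=\mathbb{P}[X=x_i\mid\mathcal{E}]$, $H(X\mid\mathcal{E})=-\sum_i p_i'\log p_i'$. *)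

theory Defs
  imports "HOL-Probability.Probability"
begin

text \<open>Shannon entropy (base 2) of a finitely supported distribution;
  outcomes of probability zero are omitted (convention 0 log 0 = 0).\<close>
definition entropy :: "'a pmf \<Rightarrow> real" where
  "entropy p = - (\<Sum>x\<in>set_pmf p. pmf p x * log 2 (pmf p x))"

end

theory Submission
  imports Defs
begin

lemma ln2_half: "ln (2::real) \<ge> 1/2"
proof -
  have "ln (1/2::real) \<le> 1/2 - 1" by (rule ln_le_minus_one) simp
  moreover have "ln (1/2::real) = - ln 2" by (simp add: ln_div)
  ultimately show ?thesis by simp
qed

lemma neglog_bound:
  fixes P :: real assumes "1/2 \<le> P" "P \<le> 1"
  shows "- log 2 P \<le> 4 * (1 - P)"
proof -
  have "ln (1/P) \<le> 1/P - 1" by (rule ln_le_minus_one) (use assms in simp)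
  also have "1/P - 1 = (1-P)/P" using assms by (simp add: field_simps)
  also have "\<dots> \<le> 2*(1-P)"
  proof -
    have "0 \<le> (1-P)*(2*P-1)" using assms by simp
    then have "1 - P \<le> 2*(1-P)*P" by (simp add: algebra_simps)
    then show ?thesis using assms by (simp add: divide_le_eq)
  qed
  finally have h: "- ln P \<le> 2*(1-P)" using assms by (simp add: ln_div)
  have "- log 2 P = - ln P / ln 2" by (simp add: log_def)
  also have "\<dots> \<le> 2*(1-P) / ln 2" using h ln2_half divide_right_mono[OF h, of "ln 2"] by simp
  also have "\<dots> \<le> 2*(1-P) / (1/2)" using ln2_half assms
    by (intro divide_left_mono) auto
  finally show ?thesis by simp
qed

theorem lemma3p1:
  fixes X :: "'a pmf" and S J :: "'a set" and A a :: real
  assumes "finite S"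
    and "set_pmf X \<subseteq> S"
    and "A \<ge> 16"
    and "\<forall>x\<in>S. pmf X x \<ge> 1 / A"
    and "J \<subseteq> S"
    and "0 \<le> a" and "a \<le> 1 / 2"
    and "measure_pmf.prob X J \<ge> 1 - a"
  shows "entropy X - entropy (cond_pmf X J) \<le> 2 * a * log 2 A"
proof -
  have pos: "pmf X x > 0" if "x \<in> S" for x
  proof -
    have "1/A > 0" using assms(3) by simp
    then show ?thesis using assms(4) that by (meson less_le_trans)
  qed
  have setX: "set_pmf X = S" using assms(2) pos by (force simp: set_pmf_eq)
  have finJ: "finite J" using assms(1,5) finite_subset by blast
  define P where "P = measure_pmf.prob X J"
  have Psum: "P = (\<Sum>x\<in>J. pmf X x)" unfolding P_def using finJ
    by (simp add: measure_measure_pmf_finite)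
  have P1: "P \<le> 1" unfolding P_def by simp
  have Ph: "P \<ge> 1/2" using assms(7,8) unfolding P_def by simp
  have S1: "(\<Sum>x\<in>S. pmf X x) = 1" using sum_pmf_eq_1[OF assms(1,2)] .
  have Jne: "set_pmf X \<inter> J \<noteq> {}"
  proof
    assume "set_pmf X \<inter> J = {}"
    then have "J = {}" using setX assms(5) by auto
    then show False using Psum Ph by simp
  qed
  have setC: "set_pmf (cond_pmf X J) = J" using Jne setX assms(5) by auto
  have pmfC: "pmf (cond_pmf X J) x = pmf X x / P" if "x \<in> J" for x
    using pmf_cond[OF Jne] that unfolding P_def by simp
  define T where "T = - (\<Sum>x\<in>J. pmf X x * log 2 (pmf X x))"
  define U where "U = - (\<Sum>x\<in>S-J. pmf X x * log 2 (pmf X x))"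
  have HX: "entropy X = T + U"
    unfolding entropy_def setX T_def U_def
    using sum.subset_diff[OF assms(5,1), of "\<lambda>x. pmf X x * log 2 (pmf X x)"] by simp
  have "entropy (cond_pmf X J) = - (\<Sum>x\<in>J. pmf X x / P * log 2 (pmf X x / P))"
    unfolding entropy_def setC using pmfC by simp
  also have "\<dots> = - (\<Sum>x\<in>J. (pmf X x * log 2 (pmf X x)) / P - pmf X x * (log 2 P / P))"
  proof -
    have "pmf X x / P * log 2 (pmf X x / P) = (pmf X x * log 2 (pmf X x)) / P - pmf X x * (log 2 P / P)"
      if "x \<in> J" for x
    proof -
      have "pmf X x > 0" using pos that assms(5) by auto
      then have "log 2 (pmf X x / P) = log 2 (pmf X x) - log 2 P" using Ph
        by (simp add: log_divide)
      then show ?thesis by (simp add: diff_divide_distrib right_diff_distrib)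
    qed
    then show ?thesis by (intro arg_cong[where f=uminus] sum.cong) auto
  qed
  also have "\<dots> = T / P + log 2 P"
    unfolding T_def sum_subtractf sum_divide_distrib[symmetric] sum_distrib_right[symmetric]
      Psum[symmetric] using Ph by simp
  finally have HC: "entropy (cond_pmf X J) = T / P + log 2 P" .
  have T0: "T \<ge> 0" unfolding T_def
  proof -
    have "pmf X x * log 2 (pmf X x) \<le> 0" if "x \<in> J" for x
    proof -
      have "pmf X x > 0" using pos that assms(5) by auto
      moreover have "log 2 (pmf X x) \<le> 0" using \<open>pmf X x > 0\<close> pmf_le_1 by simp
      ultimately show ?thesis by (simp add: mult_nonneg_nonpos)
    qed
    then show "0 \<le> - (\<Sum>x\<in>J. pmf X x * log 2 (pmf X x))" by (simp add: sum_nonpos)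
  qed
  have TP: "T \<le> T / P" using T0 Ph P1 mult_left_mono[OF P1 T0] by (simp add: le_divide_eq)
  have "U \<le> (\<Sum>x\<in>S-J. pmf X x * log 2 A)" unfolding U_def
  proof -
    have "- (pmf X x * log 2 (pmf X x)) \<le> pmf X x * log 2 A" if "x \<in> S - J" for x
    proof -
      have px: "pmf X x > 0" "pmf X x \<ge> 1/A" using pos assms(4) that by auto
      have Ap: "A > 0" using assms(3) by simp
      have "log 2 (1/A) \<le> log 2 (pmf X x)" using px Ap by (subst log_le_cancel_iff) auto
      moreover have "log 2 (1/A) = - log 2 A" using Ap by (simp add: log_divide)
      ultimately have "- log 2 (pmf X x) \<le> log 2 A" by linarith
      from mult_left_mono[OF this, of "pmf X x"] px show ?thesis by simp
    qed
    then have "(\<Sum>x\<in>S-J. - (pmf X x * log 2 (pmf X x))) \<le> (\<Sum>x\<in>S-J. pmf X x * log 2 A)"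
      by (rule sum_mono)
    then show "- (\<Sum>x\<in>S-J. pmf X x * log 2 (pmf X x)) \<le> (\<Sum>x\<in>S-J. pmf X x * log 2 A)"
      by (simp add: sum_negf)
  qed
  also have "\<dots> = (1 - P) * log 2 A"
  proof -
    have "(\<Sum>x\<in>S-J. pmf X x) = 1 - P"
      using sum.subset_diff[OF assms(5,1), of "pmf X"] S1 Psum by simp
    then show ?thesis by (simp add: sum_distrib_right[symmetric])
  qed
  finally have UB: "U \<le> (1 - P) * log 2 A" .
  have LA: "log 2 A \<ge> 4"
  proof -
    have "log 2 (16::real) = log 2 (2^4)" by simp
    also have "\<dots> = 4" using log_pow_cancel[of "2::real" 4] by simp
    finally have "log 2 (16::real) = 4" .
    moreover have "log 2 (16::real) \<le> log 2 A" using assms(3) by simp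
    ultimately show ?thesis by simp
  qed
  have NL: "- log 2 P \<le> 4 * (1 - P)" by (rule neglog_bound[OF Ph P1])
  have "entropy X - entropy (cond_pmf X J) \<le> U - log 2 P" using HX HC TP by simp
  also have "\<dots> \<le> (1 - P) * log 2 A + (1 - P) * log 2 A" using UB NL LA P1 mult_left_mono[OF LA, of "1-P"] by linarith
  also have "\<dots> \<le> 2 * a * log 2 A" using assms(8) LA mult_right_mono[of "1-P" a "log 2 A"] unfolding P_def[symmetric] by linarith
  finally show ?thesis .
qed

end
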